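(* The class of MPNNs can count $2$-paths at node level: for all node-graph pairs $(i_1,G_1),(i_2,G_2)$ with $C(2\text{-path},i_1,G_1)\ne C(2\text{-path},i_2,G_2)$, there exists an MPNN with $h^{(T)}_{i_1}(G_1)\ne h^{(T)}_{i_2}(G_2)$.
   Context: Graphs are finite, simple, undirected, $G=(V,E)$, possibly carrying node attributes $x_v$ and edge attributes $e_{u,v}$ (a fixed constant when absent). $N(v)$ is the neighbour set of $v$. A $2$-path is a sequence of edges $(v_1,v_2),(v_2,v_3)$ with $v_1,v_2,v_3$ pairwise distinct; two paths are identified when their edge sets coincide; $C(2\text{-path},i,G)$ is the number of inequivalent $2$-paths starting from $i$ (i.e. with $v_1=i$). A class $\mathcal F$ of functions on node-graph pairs can count $S$ at node level if for all $(i_1,G_1),(i_2,G_2)$ with $C(S,i_1,G_1)\ne C(S,i_2,G_2)$ there is $f\in\mathcal F$ with $f(i_1,G_1)\ne f(i_2,G_2)$. MPNNs. An MPNN is specified by $T$ and arbitrary functions $M_t$ (values in some $\mathbb R^{d_t}$), $U_t$, $t=0,\dots,T-1$: $h^{(0)}_i=x_i$ and $h^{(t+1)}_i=U_t\big(h^{(t)}_i,\sum_{j\in N(i)}M_t(h^{(t)}_i,h^{(t)}_j,e_{i,j})\big)$. The node-level function computed is $(i,G)\mapsto h^{(T)}_i$; the class of MPNNs consists of all such choices. *)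

theory Defs
  imports Complex_Main "HOL-Library.Function_Algebras"
begin

text \<open>Real vectors in R^d are represented as functions nat => real whose support
lies in {..<d}; addition is pointwise (plus_fun).\<close>

type_synonym vec = "nat \<Rightarrow> real"

definition in_dim :: "nat \<Rightarrow> vec \<Rightarrow> bool" where
  "in_dim d v \<longleftrightarrow> (\<forall>k\<ge>d. v k = 0)"

definition simple_graph :: "'v set \<Rightarrow> ('v \<Rightarrow> 'v \<Rightarrow> bool) \<Rightarrow> bool" where
  "simple_graph V E \<longleftrightarrow> finite V \<and> (\<forall>u w. E u w \<longrightarrow> u \<in> V \<and> w \<in> V)
     \<and> (\<forall>u w. E u w \<longrightarrow> E w u) \<and> (\<forall>u. \<not> E u u)"

definition nbrs :: "'v set \<Rightarrow> ('v \<Rightarrow> 'v \<Rightarrow> bool) \<Rightarrow> 'v \<Rightarrow> 'v set" where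
  "nbrs V E i = {j \<in> V. E i j}"

text \<open>2-paths starting at i, each identified with its edge set
  {{v1,v2},{v2,v3}}; C(2-path,i,G) is the number of distinct such edge sets.\<close>
definition two_paths_from :: "('v \<Rightarrow> 'v \<Rightarrow> bool) \<Rightarrow> 'v \<Rightarrow> 'v set set set" where
  "two_paths_from E i = {{{i, v2}, {v2, v3}} | v2 v3.
      E i v2 \<and> E v2 v3 \<and> i \<noteq> v2 \<and> v2 \<noteq> v3 \<and> i \<noteq> v3}"

definition count_2path :: "('v \<Rightarrow> 'v \<Rightarrow> bool) \<Rightarrow> 'v \<Rightarrow> nat" where
  "count_2path E i = card (two_paths_from E i)"

fun mpnn_h :: "(nat \<Rightarrow> vec \<Rightarrow> vec \<Rightarrow> vec \<Rightarrow> vec) \<Rightarrow> (nat \<Rightarrow> vec \<Rightarrow> vec \<Rightarrow> vec)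
    \<Rightarrow> 'v set \<Rightarrow> ('v \<Rightarrow> 'v \<Rightarrow> bool) \<Rightarrow> ('v \<Rightarrow> vec) \<Rightarrow> ('v \<Rightarrow> 'v \<Rightarrow> vec)
    \<Rightarrow> nat \<Rightarrow> 'v \<Rightarrow> vec" where
  "mpnn_h M U V E x e 0 i = x i"
| "mpnn_h M U V E x e (Suc t) i =
     U t (mpnn_h M U V E x e t i)
         (\<Sum>j\<in>nbrs V E i. M t (mpnn_h M U V E x e t i) (mpnn_h M U V E x e t j) (e i j))"

definition is_mpnn :: "nat \<Rightarrow> (nat \<Rightarrow> vec \<Rightarrow> vec \<Rightarrow> vec \<Rightarrow> vec) \<Rightarrow> (nat \<Rightarrow> vec \<Rightarrow> vec \<Rightarrow> vec) \<Rightarrow> bool" where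
  "is_mpnn T M U \<longleftrightarrow> (\<forall>t<T. (\<exists>d. \<forall>a b c. in_dim d (M t a b c))
                          \<and> (\<exists>d. \<forall>a b. in_dim d (U t a b)))"

end

theory Submission
  imports Defs
begin
definition e0 :: "real \<Rightarrow> vec" where "e0 c = (\<lambda>k. if k = 0 then c else 0)"
definition MM :: "nat \<Rightarrow> vec \<Rightarrow> vec \<Rightarrow> vec \<Rightarrow> vec" where
  "MM t a b c = (if t = 0 then e0 1 else e0 (b 0 - 1))"
definition UU :: "nat \<Rightarrow> vec \<Rightarrow> vec \<Rightarrow> vec" where
  "UU t a m = e0 (m 0)"
lemma e0d: "in_dim 1 (e0 c)" unfolding in_dim_def e0_def by auto
lemma is_mpnn_MM: "is_mpnn T MM UU"
  unfolding is_mpnn_def MM_def UU_def using e0d by metis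
lemma sum_fun_at: "(sum f S :: vec) k = (\<Sum>j\<in>S. f j k)"
  by (induction S rule: infinite_finite_induct) (auto simp: plus_fun_def zero_fun_def)
lemma h1: "mpnn_h MM UU V E x e 1 i 0 = real (card (nbrs V E i))"
  by (simp add: UU_def sum_fun_at MM_def e0_def)
lemma h2: "mpnn_h MM UU V E x e 2 i 0 = (\<Sum>j\<in>nbrs V E i. real (card (nbrs V E j)) - 1)"
proof -
  have "mpnn_h MM UU V E x e 2 i 0 = (\<Sum>j\<in>nbrs V E i. mpnn_h MM UU V E x e 1 j 0 - 1)"
    by (simp add: numeral_2_eq_2 UU_def sum_fun_at MM_def e0_def)
  then show ?thesis unfolding h1 .
qed

lemma count_eq:
  assumes g: "simple_graph V E"
  shows "real (count_2path E i) = (\<Sum>j\<in>nbrs V E i. real (card (nbrs V E j)) - 1)"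
proof -
  have fin: "finite V" and sym: "\<And>u w. E u w \<Longrightarrow> E w u" and irr: "\<And>u. \<not> E u u"
    and inV: "\<And>u w. E u w \<Longrightarrow> u \<in> V \<and> w \<in> V"
    using g unfolding simple_graph_def by auto
  define S where "S = (SIGMA v2:nbrs V E i. nbrs V E v2 - {i})"
  define f where "f = (\<lambda>(v2, v3). {{i, v2}, {v2, v3}})"
  have tp: "two_paths_from E i = f ` S"
  proof
    show "two_paths_from E i \<subseteq> f ` S"
    proof
      fix P assume "P \<in> two_paths_from E i"
      then obtain v2 v3 where P: "P = {{i, v2}, {v2, v3}}" and h: "E i v2" "E v2 v3" "i \<noteq> v3"
        unfolding two_paths_from_def by blast
      have "(v2, v3) \<in> S" using h inV unfolding S_def nbrs_def by auto
      moreover have "P = f (v2, v3)" using P unfolding f_def by simp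
      ultimately show "P \<in> f ` S" by blast
    qed
    show "f ` S \<subseteq> two_paths_from E i"
    proof
      fix P assume "P \<in> f ` S"
      then obtain v2 v3 where P: "P = f (v2, v3)" and h: "(v2, v3) \<in> S" by auto
      have h2: "E i v2" "E v2 v3" "i \<noteq> v3" using h unfolding S_def nbrs_def by auto
      have "i \<noteq> v2" "v2 \<noteq> v3" using h2 irr by metis+
      then show "P \<in> two_paths_from E i" using h2 P unfolding two_paths_from_def f_def by blast
    qed
  qed
  have inj: "inj_on f S"
  proof (rule inj_onI)
    fix p q assume p: "p \<in> S" and q: "q \<in> S" and eq: "f p = f q"
    obtain a b where pab: "p = (a, b)" by force
    obtain c d where qcd: "q = (c, d)" by force
    have ab: "a \<noteq> i" "b \<noteq> i" "a \<noteq> b" using p irr unfolding pab S_def nbrs_def by auto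
    have cd: "c \<noteq> i" "d \<noteq> i" "c \<noteq> d" using q irr unfolding qcd S_def nbrs_def by auto
    have E: "{{i, a}, {a, b}} = {{i, c}, {c, d}}" using eq unfolding pab qcd f_def by simp
    have "{i, a} \<in> {{i, c}, {c, d}}" using E by (metis insertI1)
    then have "{i, a} = {i, c}" using ab cd by (simp add: doubleton_eq_iff)
    then have ac: "a = c" using ab cd by (simp add: doubleton_eq_iff)
    have "{a, b} \<in> {{i, c}, {c, d}}" using E by (metis insertI1 insertI2)
    then have "b = d" using ab cd ac by (simp add: doubleton_eq_iff)
    then show "p = q" using ac pab qcd by simp
  qed
  have finN: "\<And>u. finite (nbrs V E u)" using fin unfolding nbrs_def by auto
  have "count_2path E i = card S"
    unfolding count_2path_def tp using card_image[OF inj] by simp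
  also have "card S = (\<Sum>j\<in>nbrs V E i. card (nbrs V E j - {i}))"
    unfolding S_def by (rule card_SigmaI) (auto simp: finN)
  finally have c: "real (count_2path E i) = (\<Sum>j\<in>nbrs V E i. real (card (nbrs V E j - {i})))"
    by simp
  have "\<And>j. j \<in> nbrs V E i \<Longrightarrow> real (card (nbrs V E j - {i})) = real (card (nbrs V E j)) - 1"
  proof -
    fix j assume "j \<in> nbrs V E i"
    then have ij: "i \<in> nbrs V E j" using sym inV unfolding nbrs_def by auto
    then have "card (nbrs V E j) > 0" using finN card_gt_0_iff by blast
    then show "real (card (nbrs V E j - {i})) = real (card (nbrs V E j)) - 1"
      using card_Diff_singleton[OF ij] by (simp add: of_nat_diff)
  qed
  then show ?thesis using c by simp
qed

theorem theorem6:
  fixes V1 V2 :: "'v set" and E1 E2 :: "'v \<Rightarrow> 'v \<Rightarrow> bool"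
    and x1 x2 :: "'v \<Rightarrow> vec" and e1 e2 :: "'v \<Rightarrow> 'v \<Rightarrow> vec"
    and i1 i2 :: 'v
  assumes "simple_graph V1 E1" and "simple_graph V2 E2"
    and "i1 \<in> V1" and "i2 \<in> V2"
    and "\<And>v. in_dim d1 (x1 v)" and "\<And>v. in_dim d1 (x2 v)"
    and "\<And>u v. in_dim d2 (e1 u v)" and "\<And>u v. in_dim d2 (e2 u v)"
    and "count_2path E1 i1 \<noteq> count_2path E2 i2"
  shows "\<exists>T M U. is_mpnn T M U \<and>
           mpnn_h M U V1 E1 x1 e1 T i1 \<noteq> mpnn_h M U V2 E2 x2 e2 T i2"
proof (intro exI conjI)
  show "is_mpnn 2 MM UU" by (rule is_mpnn_MM)
  have "mpnn_h MM UU V1 E1 x1 e1 2 i1 0 \<noteq> mpnn_h MM UU V2 E2 x2 e2 2 i2 0"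
    unfolding h2 count_eq[OF assms(1), of i1, symmetric] count_eq[OF assms(2), of i2, symmetric]
    using assms(9) by simp
  then show "mpnn_h MM UU V1 E1 x1 e1 2 i1 \<noteq> mpnn_h MM UU V2 E2 x2 e2 2 i2" by metis
qed

end
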